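(* Let $(E,\rho)$ be a weighted space and $(P(t))_{t\ge0}$ a generalized Feller semigroup on $\mathscr{B}^\rho(E)$, with associated measures $p(t)(x,\cdot)$. Let $\hat p(t)$ be the restriction of $p(t)$ to $E\times\mathcal{B}_0(E)$. Then for every $t\ge0$ and $A\in\mathcal{B}_0(E)$ the map $x\mapsto \hat p(t)(x,A)$ is $\mathcal{B}_0(E)$-measurable, and for all $s,t\ge0$, $x\in E$, $A\in\mathcal{B}_0(E)$, $$\int_E \hat p(s)(y,A)\,\hat p(t)(x,dy)=\hat p(s+t)(x,A),$$ i.e. $(\hat p(t))_{t\ge0}$ is a semigroup of transition kernels on $(E,\mathcal{B}_0(E))$.
   Context: A weighted space is a pair $(E,\rho)$ where $E$ is a completely regular Hausdorff topological space and $\rho:E\to(0,\infty)$ is an admissible weight function, meaning that for every $R\ge 0$ the sublevel set $K_R:=\{x\in E:\rho(x)\le R\}$ is compact. For $f:E\to\mathbb{R}$ put $\|f\|_\rho:=\sup_{x\in E}|f(x)|/\rho(x)$; $\mathscr{B}^\rho(E)$ denotes the closure of $C_b(E)$ with respect to $\|\cdot\|_\rho$ inside $\{f:E\to\mathbb{R}:\|f\|_\rho<\infty\}$. A generalized Feller semigroup on $\mathscr{B}^\rho(E)$ is a family $(P(t))_{t\ge0}$ of bounded linear operators on $\mathscr{B}^\rho(E)$ such that (P1) $P(0)=\mathrm{Id}$; (P2) $P(t+s)=P(s)P(t)$ for all $s,t\ge0$; (P3) $\lim_{t\downarrow0}P(t)f(x)=f(x)$ for all $f\in\mathscr{B}^\rho(E)$,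 $x\in E$; (P4) there exist $\varepsilon>0$, $C<\infty$ with $\|P(t)\|_{L(\mathscr{B}^\rho(E))}\le C$ for all $t\in[0,\varepsilon]$; (P5) each $P(t)$ is a positive operator. For each $t\ge 0$, $x\in E$ there is a unique positive finite Radon measure $p(t)(x,\cdot)$ on the Borel σ-algebra $\mathcal{B}(E)$ with $\int\rho\,dp(t)(x,\cdot)<\infty$ and $P(t)f(x)=\int_E f(y)\,p(t)(x,dy)$ for all $f\in\mathscr{B}^\rho(E)$. The Baire σ-algebra $\mathcal{B}_0(E)$ is the smallest σ-algebra on $E$ making all bounded continuous functions measurable. *)

theory Defs
  imports "HOL-Probability.Probability"
begin

definition Cb :: "('a::topological_space \<Rightarrow> real) set" where
  "Cb = {f. continuous_on UNIV f \<and> bounded (range f)}"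

definition admissible_weight :: "('a::topological_space \<Rightarrow> real) \<Rightarrow> bool" where
  "admissible_weight \<rho> \<longleftrightarrow> (\<forall>x. \<rho> x > 0) \<and> (\<forall>R\<ge>0. compact {x. \<rho> x \<le> R})"

definition weighted_space :: "('a::topological_space \<Rightarrow> real) \<Rightarrow> bool" where
  "weighted_space \<rho> \<longleftrightarrow> completely_regular_space (euclidean :: 'a topology)
      \<and> Hausdorff_space (euclidean :: 'a topology) \<and> admissible_weight \<rho>"

definition wfinite :: "('a \<Rightarrow> real) \<Rightarrow> ('a \<Rightarrow> real) \<Rightarrow> bool" where
  "wfinite \<rho> f \<longleftrightarrow> bdd_above (range (\<lambda>x. \<bar>f x\<bar> / \<rho> x))"

definition wnorm :: "('a \<Rightarrow> real) \<Rightarrow> ('a \<Rightarrow> real) \<Rightarrow> real" where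
  "wnorm \<rho> f = (SUP x. \<bar>f x\<bar> / \<rho> x)"

definition Brho :: "('a::topological_space \<Rightarrow> real) \<Rightarrow> ('a \<Rightarrow> real) set" where
  "Brho \<rho> = {f. wfinite \<rho> f \<and>
     (\<forall>e>0. \<exists>g\<in>Cb. wfinite \<rho> g \<and> wfinite \<rho> (\<lambda>x. f x - g x) \<and> wnorm \<rho> (\<lambda>x. f x - g x) \<le> e)}"

text \<open>Bounded linear operator on B^rho(E) (only its action on B^rho(E) matters).\<close>
definition bounded_linear_on_Brho ::
    "('a::topological_space \<Rightarrow> real) \<Rightarrow> (('a \<Rightarrow> real) \<Rightarrow> ('a \<Rightarrow> real)) \<Rightarrow> bool" where
  "bounded_linear_on_Brho \<rho> T \<longleftrightarrow>
     (\<forall>f\<in>Brho \<rho>. T f \<in> Brho \<rho>) \<and>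
     (\<forall>f\<in>Brho \<rho>. \<forall>g\<in>Brho \<rho>. \<forall>a b::real.
         T (\<lambda>x. a * f x + b * g x) = (\<lambda>x. a * T f x + b * T g x)) \<and>
     (\<exists>C. \<forall>f\<in>Brho \<rho>. wnorm \<rho> (T f) \<le> C * wnorm \<rho> f)"

definition gen_feller_semigroup ::
    "('a::topological_space \<Rightarrow> real) \<Rightarrow> (real \<Rightarrow> ('a \<Rightarrow> real) \<Rightarrow> ('a \<Rightarrow> real)) \<Rightarrow> bool" where
  "gen_feller_semigroup \<rho> P \<longleftrightarrow>
     (\<forall>t\<ge>0. bounded_linear_on_Brho \<rho> (P t)) \<and>
     (\<forall>f\<in>Brho \<rho>. P 0 f = f) \<and>
     (\<forall>s\<ge>0. \<forall>t\<ge>0. \<forall>f\<in>Brho \<rho>. P (t + s) f = P s (P t f)) \<and>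
     (\<forall>f\<in>Brho \<rho>. \<forall>x. ((\<lambda>t. P t f x) \<longlongrightarrow> f x) (at_right 0)) \<and>
     (\<exists>\<epsilon>>0. \<exists>C. \<forall>t\<in>{0..\<epsilon>}. \<forall>f\<in>Brho \<rho>. wnorm \<rho> (P t f) \<le> C * wnorm \<rho> f) \<and>
     (\<forall>t\<ge>0. \<forall>f\<in>Brho \<rho>. (\<forall>x. f x \<ge> 0) \<longrightarrow> (\<forall>x. P t f x \<ge> 0))"

definition inner_regular_compact :: "'a::topological_space measure \<Rightarrow> bool" where
  "inner_regular_compact M \<longleftrightarrow>
     (\<forall>B\<in>sets M. emeasure M B = (SUP K\<in>{K. compact K \<and> K \<subseteq> B}. emeasure M K))"

definition associated_measures ::
    "('a::topological_space \<Rightarrow> real) \<Rightarrow> (real \<Rightarrow> ('a \<Rightarrow> real) \<Rightarrow> ('a \<Rightarrow> real))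
      \<Rightarrow> (real \<Rightarrow> 'a \<Rightarrow> 'a measure) \<Rightarrow> bool" where
  "associated_measures \<rho> P p \<longleftrightarrow>
     (\<forall>t\<ge>0. \<forall>x. sets (p t x) = sets borel \<and> finite_measure (p t x)
        \<and> inner_regular_compact (p t x) \<and> integrable (p t x) \<rho>
        \<and> (\<forall>f\<in>Brho \<rho>. P t f x = (\<integral>y. f y \<partial>(p t x))))"

definition baire :: "'a::topological_space measure" where
  "baire = sigma UNIV {f -` B | f B. f \<in> Cb \<and> B \<in> sets (borel :: real measure)}"

definition restr_baire :: "'a::topological_space measure \<Rightarrow> 'a measure" where
  "restr_baire M = measure_of UNIV (sets baire) (emeasure M)"

end

theory Submission
  imports Defs
begin


lemma rho_lower:
  fixes \<rho> :: "'a::topological_space \<Rightarrow> real"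
  assumes "weighted_space \<rho>"
  shows "\<exists>c>0. \<forall>x. c \<le> \<rho> x"
proof -
  have H: "Hausdorff_space (euclidean :: 'a topology)"
    using assms unfolding weighted_space_def by blast
  have pos: "\<And>x. \<rho> x > 0"
    using assms unfolding weighted_space_def admissible_weight_def by blast
  have cpt0: "\<forall>R\<ge>0. compact {x. \<rho> x \<le> R}"
    using assms unfolding weighted_space_def admissible_weight_def by simp
  have cpt: "compact {x. \<rho> x \<le> R}" if "R \<ge> 0" for R by (rule cpt0[rule_format, OF that])
  have cl: "closed {x. \<rho> x \<le> R}" if "R \<ge> 0" for R
    unfolding closed_closedin by (rule compactin_imp_closedin[OF H]) (simp only: compactin_euclidean_iff cpt[OF that])
  define U where "U = (\<lambda>n::nat. - {x. \<rho> x \<le> 1 / real (Suc n)})"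
  have "compact {x. \<rho> x \<le> 1}" by (rule cpt) simp
  moreover have "\<And>T. T \<in> UNIV \<Longrightarrow> open (U T)" unfolding U_def using cl
    by (intro open_Compl) auto
  moreover have "{x. \<rho> x \<le> 1} \<subseteq> \<Union> (U ` UNIV)"
  proof
    fix x assume "x \<in> {x. \<rho> x \<le> 1}"
    obtain n where "inverse (real (Suc n)) < \<rho> x" using reals_Archimedean pos by blast
    then have "\<not> \<rho> x \<le> 1 / real (Suc n)" by (simp add: divide_inverse)
    then show "x \<in> \<Union> (U ` UNIV)" unfolding U_def by blast
  qed
  ultimately obtain C' where C': "finite C'" "{x. \<rho> x \<le> 1} \<subseteq> \<Union> (U ` C')"
    by (rule compactE_image) auto
  obtain k where k: "C' \<subseteq> {..<k}" using finite_nat_bounded[OF C'(1)] by blast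
  have "1 / real (Suc k) \<le> \<rho> x" for x
  proof (cases "\<rho> x \<le> 1")
    case True
    then obtain n where "n \<in> C'" "x \<in> U n" using C'(2) by auto
    then have "n < k" "1 / real (Suc n) < \<rho> x" using k unfolding U_def by auto
    moreover have "1 / real (Suc k) \<le> 1 / real (Suc n)" using \<open>n < k\<close>
      by (intro divide_left_mono) auto
    ultimately show ?thesis by linarith
  next
    case False
    have "1 / real (Suc k) \<le> 1" by simp
    then show ?thesis using False by linarith
  qed
  then show ?thesis by (intro exI[of _ "1 / real (Suc k)"]) auto
qed

lemma Cb_bound: assumes "f \<in> Cb" shows "\<exists>M. \<forall>x. \<bar>f x\<bar> \<le> M"
  using assms unfolding Cb_def by (auto simp: bounded_iff)

lemma Cb_Brho:
  fixes \<rho> :: "'a::topological_space \<Rightarrow> real"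
  assumes "weighted_space \<rho>" "f \<in> Cb"
  shows "f \<in> Brho \<rho>"
proof -
  obtain c where c: "c > 0" "\<And>x. c \<le> \<rho> x" using rho_lower[OF assms(1)] by blast
  obtain M where M: "\<And>x. \<bar>f x\<bar> \<le> M" using Cb_bound[OF assms(2)] by blast
  have "\<bar>f x\<bar> / \<rho> x \<le> M / c" for x
  proof -
    have "0 \<le> M" using M[of x] by linarith
    have "\<bar>f x\<bar> / \<rho> x \<le> M / \<rho> x" using M c(1) c(2)[of x] by (intro divide_right_mono) auto
    also have "\<dots> \<le> M / c" using \<open>0 \<le> M\<close> c by (intro divide_left_mono) (auto intro: mult_pos_pos order.strict_trans2)
    finally show ?thesis .
  qed
  then have wf: "wfinite \<rho> f" unfolding wfinite_def by (intro bdd_aboveI[where M="M/c"]) auto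
  have z: "wfinite \<rho> (\<lambda>x. f x - f x)" "wnorm \<rho> (\<lambda>x. f x - f x) = 0"
    by (auto simp: wfinite_def wnorm_def)
  show ?thesis unfolding Brho_def using wf z assms(2) by force
qed

lemma space_baire[simp]: "space baire = UNIV"
  unfolding baire_def by (simp add: space_measure_of_conv)

lemma sets_baire: "sets baire = sigma_sets UNIV {f -` B | f B. f \<in> Cb \<and> B \<in> sets (borel :: real measure)}"
  unfolding baire_def by (rule sets_measure_of) auto

lemma Cb_meas: "f \<in> Cb \<Longrightarrow> f \<in> borel_measurable baire"
  unfolding measurable_def sets_baire by auto

lemma ws_pos: "weighted_space \<rho> \<Longrightarrow> \<rho> x > 0"
  unfolding weighted_space_def admissible_weight_def by blast

lemma Brho_lim:
  assumes "weighted_space \<rho>" "f \<in> Brho \<rho>"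
  obtains g where "\<And>n. g n \<in> Cb" "\<And>x. (\<lambda>n. g n x) \<longlonglongrightarrow> f x"
proof -
  have "\<forall>n. \<exists>g\<in>Cb. wfinite \<rho> g \<and> wfinite \<rho> (\<lambda>x. f x - g x) \<and> wnorm \<rho> (\<lambda>x. f x - g x) \<le> 1 / real (Suc n)"
    using assms unfolding Brho_def by auto
  then obtain g where g: "\<And>n. g n \<in> Cb" "\<And>n. wfinite \<rho> (\<lambda>x. f x - g n x)"
    "\<And>n. wnorm \<rho> (\<lambda>x. f x - g n x) \<le> 1 / real (Suc n)" by metis
  show ?thesis
  proof (rule that[OF g(1)])
    fix x
    have le1: "\<bar>f x - g n x\<bar> / \<rho> x \<le> 1 / real (Suc n)" for n
      using cSUP_upper[of x UNIV "\<lambda>x. \<bar>f x - g n x\<bar> / \<rho> x"] g(2)[of n] g(3)[of n]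
      unfolding wfinite_def wnorm_def by auto
    have pos: "\<rho> x > 0" using ws_pos[OF assms(1)] .
    have le2: "norm (f x - g n x) \<le> \<rho> x * inverse (real (Suc n))" for n
    proof -
      have "\<bar>f x - g n x\<bar> \<le> (1 / real (Suc n)) * \<rho> x"
        using le1[of n] pos by (simp only: pos_divide_le_eq)
      then show ?thesis by (simp add: divide_inverse mult.commute)
    qed
    have "(\<lambda>n. \<rho> x * inverse (real (Suc n))) \<longlonglongrightarrow> \<rho> x * 0"
      by (rule tendsto_mult[OF tendsto_const LIMSEQ_inverse_real_of_nat])
    then have lim0: "(\<lambda>n. \<rho> x * inverse (real (Suc n))) \<longlonglongrightarrow> 0" by simp
    have ev: "\<forall>\<^sub>F n in sequentially. norm (f x - g n x) \<le> \<rho> x * inverse (real (Suc n))"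
      by (intro always_eventually allI le2)
    have "(\<lambda>n. f x - g n x) \<longlonglongrightarrow> 0"
      by (rule Lim_null_comparison[OF ev lim0])
    from tendsto_diff[OF tendsto_const[of "f x"] this] show "(\<lambda>n. g n x) \<longlonglongrightarrow> f x" by simp
  qed
qed

lemma Brho_meas:
  assumes "weighted_space \<rho>" "f \<in> Brho \<rho>" shows "f \<in> borel_measurable baire"
proof -
  obtain g where g: "\<And>n. g n \<in> Cb" "\<And>x. (\<lambda>n. g n x) \<longlonglongrightarrow> f x" using Brho_lim[OF assms] by metis
  show ?thesis
  proof (rule borel_measurable_LIMSEQ_real[where u=g])
    show "g i \<in> borel_measurable baire" for i by (rule Cb_meas[OF g(1)])
    show "(\<lambda>i. g i x) \<longlonglongrightarrow> f x" for x by (rule g(2))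
  qed
qed

lemma baire_sub_borel: "sets baire \<subseteq> sets borel"
proof -
  have "sigma_sets (space borel) {f -` B | f B. f \<in> Cb \<and> B \<in> sets (borel :: real measure)} \<subseteq> (sets borel :: 'a set set)"
  proof (rule sets.sigma_sets_subset)
  show "{f -` B | f B. f \<in> Cb \<and> B \<in> sets (borel :: real measure)} \<subseteq> (sets borel :: 'a set set)"
  proof clarify
    fix f :: "'a \<Rightarrow> real" and B :: "real set" assume "f \<in> Cb" "B \<in> sets borel"
    then have "f \<in> borel_measurable borel" unfolding Cb_def by (auto intro: borel_measurable_continuous_onI)
    then show "f -` B \<in> sets borel" using \<open>B \<in> sets borel\<close> measurable_sets[of f borel borel B] by simp
  qed
  qed
  then show ?thesis unfolding sets_baire by simp
qed

lemma baire_meas_sub: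
  assumes "f \<in> borel_measurable baire" "sets M = sets (borel :: 'a::topological_space measure)"
  shows "f \<in> borel_measurable M"
proof -
  have sp: "space M = UNIV" using sets_eq_imp_space_eq[OF assms(2)] by simp
  have "f -` B \<in> sets M" if "B \<in> sets borel" for B
  proof -
    have "f -` B \<inter> space baire \<in> sets baire" by (rule measurable_sets[OF assms(1) that])
    then have "f -` B \<in> sets baire" by simp
    then show ?thesis using baire_sub_borel assms(2) by blast
  qed
  then show ?thesis unfolding measurable_def sp by simp
qed

lemma Brho_integrable:
  assumes "weighted_space \<rho>" "f \<in> Brho \<rho>" "sets M = sets borel" "integrable M \<rho>"
  shows "integrable M f"
proof (rule Bochner_Integration.integrable_bound)
  have wf: "wfinite \<rho> f" using assms(2) unfolding Brho_def by auto
  show "integrable M (\<lambda>x. wnorm \<rho> f * \<rho> x)" using assms(4) by simp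
  show "f \<in> borel_measurable M" by (rule baire_meas_sub[OF Brho_meas[OF assms(1,2)] assms(3)])
  show "AE x in M. norm (f x) \<le> norm (wnorm \<rho> f * \<rho> x)"
  proof (rule AE_I2)
    fix x
    have pos: "\<rho> x > 0" using ws_pos[OF assms(1)] .
    have "\<bar>f x\<bar> / \<rho> x \<le> wnorm \<rho> f"
      using cSUP_upper[of x UNIV "\<lambda>x. \<bar>f x\<bar> / \<rho> x"] wf unfolding wfinite_def wnorm_def by auto
    moreover have "0 \<le> \<bar>f x\<bar> / \<rho> x" using pos by simp
    ultimately have "0 \<le> wnorm \<rho> f" by linarith
    moreover have "\<bar>f x\<bar> \<le> wnorm \<rho> f * \<rho> x" using \<open>\<bar>f x\<bar> / \<rho> x \<le> wnorm \<rho> f\<close> pos by (simp only: pos_divide_le_eq)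
    ultimately show "norm (f x) \<le> norm (wnorm \<rho> f * \<rho> x)"
      using pos by (simp add: divide_le_eq abs_mult)
  qed
qed



definition hseq :: "('a \<Rightarrow> real) \<Rightarrow> nat \<Rightarrow> 'a \<Rightarrow> real" where
  "hseq f n = (\<lambda>y. max 0 (1 - real n * \<bar>f y\<bar>))"

lemma hseq_Cb: assumes "f \<in> Cb" shows "hseq f n \<in> Cb"
proof -
  have c: "continuous_on UNIV f" using assms unfolding Cb_def by blast
  have "continuous_on UNIV (hseq f n)" unfolding hseq_def
    by (intro continuous_intros c)
  moreover have "bounded (range (hseq f n))" unfolding hseq_def bounded_iff
    by (intro exI[of _ 1]) auto
  ultimately show ?thesis unfolding Cb_def by blast
qed

lemma hseq_bounds: "0 \<le> hseq f n y" "hseq f n y \<le> 1"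
  unfolding hseq_def by auto

lemma hseq_lim: "(\<lambda>n. hseq f n y) \<longlonglongrightarrow> indicator (f -` {0}) y"
proof (cases "f y = 0")
  case True
  then show ?thesis unfolding hseq_def by (simp add: indicator_def)
next
  case False
  then have pos: "\<bar>f y\<bar> > 0" by simp
  obtain N where N: "inverse \<bar>f y\<bar> < real N" using reals_Archimedean2 by blast
  have "hseq f n y = 0" if "n \<ge> N" for n
  proof -
    have "inverse \<bar>f y\<bar> < real n" using N that by (meson less_le_trans of_nat_le_iff)
    then have "1 < real n * \<bar>f y\<bar>" using pos by (simp add: field_simps)
    then show ?thesis unfolding hseq_def by simp
  qed
  then have "eventually (\<lambda>n. hseq f n y = 0) sequentially"
    unfolding eventually_sequentially by blast
  then have "(\<lambda>n. hseq f n y) \<longlonglongrightarrow> 0" by (rule tendsto_eventually)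
  then show ?thesis using False by (simp add: indicator_def)
qed

lemma Cb_zero_borel: assumes "f \<in> Cb" shows "f -` {0} \<in> sets borel"
proof -
  have "f \<in> borel_measurable borel" using assms unfolding Cb_def by (auto intro: borel_measurable_continuous_onI)
  then show ?thesis using measurable_sets[of f borel borel "{0}"] by simp
qed

lemma Cb_I: assumes "continuous_on UNIV h" "\<And>x. \<bar>h x\<bar> \<le> M" shows "h \<in> Cb"
proof -
  have "bounded (range h)" unfolding bounded_iff using assms(2) by (intro exI[of _ M]) auto
  then show ?thesis using assms(1) unfolding Cb_def by blast
qed

definition ZS :: "'a::topological_space set set" where
  "ZS = {f -` {0} | f. f \<in> Cb}"

lemma Cb_cont: "f \<in> Cb \<Longrightarrow> continuous_on UNIV f"
  unfolding Cb_def by blast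

lemma ZS_Int_stable: "Int_stable (ZS :: 'a::topological_space set set)"
proof (rule Int_stableI)
  fix a b :: "'a set" assume "a \<in> ZS" "b \<in> ZS"
  then obtain f g :: "'a \<Rightarrow> real" where f: "f \<in> Cb" "a = f -` {0}" and g: "g \<in> Cb" "b = g -` {0}"
    unfolding ZS_def by blast
  obtain M1 where M1: "\<And>x. \<bar>f x\<bar> \<le> M1" using Cb_bound[OF f(1)] by blast
  obtain M2 where M2: "\<And>x. \<bar>g x\<bar> \<le> M2" using Cb_bound[OF g(1)] by blast
  have h: "(\<lambda>x. \<bar>f x\<bar> + \<bar>g x\<bar>) \<in> Cb"
  proof (rule Cb_I[where M="M1 + M2"])
    show "continuous_on UNIV (\<lambda>x. \<bar>f x\<bar> + \<bar>g x\<bar>)"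
      by (intro continuous_intros Cb_cont f(1) g(1))
    show "\<bar>\<bar>f x\<bar> + \<bar>g x\<bar>\<bar> \<le> M1 + M2" for x using M1[of x] M2[of x] by simp
  qed
  have "a \<inter> b = (\<lambda>x. \<bar>f x\<bar> + \<bar>g x\<bar>) -` {0}"
  proof
    show "a \<inter> b \<subseteq> (\<lambda>x. \<bar>f x\<bar> + \<bar>g x\<bar>) -` {0}" using f(2) g(2) by auto
    show "(\<lambda>x. \<bar>f x\<bar> + \<bar>g x\<bar>) -` {0} \<subseteq> a \<inter> b"
    proof
      fix x assume "x \<in> (\<lambda>x. \<bar>f x\<bar> + \<bar>g x\<bar>) -` {0}"
      then have "\<bar>f x\<bar> + \<bar>g x\<bar> = 0" by simp
      then have "f x = 0" "g x = 0" by linarith+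
      then show "x \<in> a \<inter> b" using f(2) g(2) by simp
    qed
  qed
  then show "a \<inter> b \<in> ZS" using h unfolding ZS_def by blast
qed

lemma sets_baire_ZS: "sets baire = sigma_sets UNIV (ZS :: 'a::topological_space set set)"
  unfolding sets_baire
proof (rule sigma_sets_eqI)
  fix b :: "'a set" assume "b \<in> ZS"
  then obtain f where f: "f \<in> Cb" "b = f -` {0}" unfolding ZS_def by blast
  have "b \<in> {f -` B | f B. f \<in> Cb \<and> B \<in> sets (borel :: real measure)}"
    unfolding f(2) by (rule CollectI, rule exI[of _ f], rule exI[of _ "{0}"]) (simp add: f(1))
  then show "b \<in> sigma_sets UNIV {f -` B | f B. f \<in> Cb \<and> B \<in> sets (borel :: real measure)}"
    by (rule sigma_sets.Basic)
next
  fix a :: "'a set" assume "a \<in> {f -` B | f B. f \<in> Cb \<and> B \<in> sets (borel :: real measure)}"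
  then obtain f :: "'a \<Rightarrow> real" and B where f: "f \<in> Cb" "B \<in> sets borel" "a = f -` B" by blast
  obtain M where M: "\<And>x. \<bar>f x\<bar> \<le> M" using Cb_bound[OF f(1)] by blast
  let ?S = "sigma UNIV (ZS :: 'a set set)"
  have sp: "space ?S = UNIV" by (simp add: space_measure_of_conv)
  have ss: "sets ?S = sigma_sets UNIV ZS" by (rule sets_measure_of) simp
  have "f \<in> borel_measurable ?S"
    unfolding borel_measurable_iff_le
  proof
    fix c :: real
    have hc: "(\<lambda>w. max (f w - c) 0) \<in> Cb"
    proof (rule Cb_I[where M="\<bar>M\<bar> + \<bar>c\<bar>"])
      show "continuous_on UNIV (\<lambda>w. max (f w - c) 0)"
        by (intro continuous_intros Cb_cont f(1))
      show "\<bar>max (f w - c) 0\<bar> \<le> \<bar>M\<bar> + \<bar>c\<bar>" for w using M[of w] by arith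
    qed
    have "{w \<in> space ?S. f w \<le> c} = (\<lambda>w. max (f w - c) 0) -` {0}" unfolding sp
      by (auto simp: max_def split: if_splits)
    also have "\<dots> \<in> ZS" unfolding ZS_def by (rule CollectI, rule exI[of _ "\<lambda>w. max (f w - c) 0"]) (simp add: hc)
    finally have "{w \<in> space ?S. f w \<le> c} \<in> ZS" .
    then show "{w \<in> space ?S. f w \<le> c} \<in> sets ?S" unfolding ss by (rule sigma_sets.Basic)
  qed
  from measurable_sets[OF this f(2)] show "a \<in> sigma_sets UNIV ZS" unfolding sp ss f(3) by simp
qed

context
  fixes \<rho> :: "'a::topological_space \<Rightarrow> real"
    and P :: "real \<Rightarrow> ('a \<Rightarrow> real) \<Rightarrow> ('a \<Rightarrow> real)"
    and p :: "real \<Rightarrow> 'a \<Rightarrow> 'a measure"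
  assumes ws: "weighted_space \<rho>"
    and gf: "gen_feller_semigroup \<rho> P"
    and am: "associated_measures \<rho> P p"
begin

lemma gf_bl: "t \<ge> 0 \<Longrightarrow> bounded_linear_on_Brho \<rho> (P t)"
proof -
  assume t: "t \<ge> 0"
  have "\<forall>t\<ge>0. bounded_linear_on_Brho \<rho> (P t)" using gf unfolding gen_feller_semigroup_def by (elim conjE)
  then show ?thesis using t by simp
qed

lemma P_Brho: "t \<ge> 0 \<Longrightarrow> f \<in> Brho \<rho> \<Longrightarrow> P t f \<in> Brho \<rho>"
proof -
  assume t: "t \<ge> 0" and f: "f \<in> Brho \<rho>"
  have "\<forall>f\<in>Brho \<rho>. P t f \<in> Brho \<rho>" using gf_bl[OF t] unfolding bounded_linear_on_Brho_def by (elim conjE)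
  then show ?thesis using f by simp
qed

lemma P_semi: "s \<ge> 0 \<Longrightarrow> t \<ge> 0 \<Longrightarrow> f \<in> Brho \<rho> \<Longrightarrow> P (s + t) f = P t (P s f)"
proof -
  assume st: "s \<ge> 0" "t \<ge> 0" and f: "f \<in> Brho \<rho>"
  have "\<forall>s\<ge>0. \<forall>t\<ge>0. \<forall>f\<in>Brho \<rho>. P (t + s) f = P s (P t f)" using gf unfolding gen_feller_semigroup_def by (elim conjE)
  then have "P (s + t) f = P t (P s f)" using st f by simp
  then show ?thesis .
qed

lemma am_all: "t \<ge> 0 \<Longrightarrow> sets (p t x) = sets borel \<and> finite_measure (p t x)
        \<and> inner_regular_compact (p t x) \<and> integrable (p t x) \<rho>
        \<and> (\<forall>f\<in>Brho \<rho>. P t f x = (\<integral>y. f y \<partial>(p t x)))"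
proof -
  assume t: "t \<ge> 0"
  have "\<forall>t\<ge>0. \<forall>x. sets (p t x) = sets borel \<and> finite_measure (p t x)
        \<and> inner_regular_compact (p t x) \<and> integrable (p t x) \<rho>
        \<and> (\<forall>f\<in>Brho \<rho>. P t f x = (\<integral>y. f y \<partial>(p t x)))" using am unfolding associated_measures_def .
  then show ?thesis using t by simp
qed

lemma p_sets: assumes "t \<ge> 0" shows "sets (p t x) = sets borel"
  using am_all[OF assms, of x] by (elim conjE)

lemma p_fin: assumes "t \<ge> 0" shows "finite_measure (p t x)"
  using am_all[OF assms, of x] by (elim conjE)

lemma p_int: assumes "t \<ge> 0" shows "integrable (p t x) \<rho>"
  using am_all[OF assms, of x] by (elim conjE)

lemma p_rep: "t \<ge> 0 \<Longrightarrow> f \<in> Brho \<rho> \<Longrightarrow> P t f x = (\<integral>y. f y \<partial>(p t x))"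
proof -
  assume t: "t \<ge> 0" and f: "f \<in> Brho \<rho>"
  have "\<forall>f\<in>Brho \<rho>. P t f x = (\<integral>y. f y \<partial>(p t x))" using am_all[OF t, of x] by (elim conjE)
  then show ?thesis using f by simp
qed

lemma p_space: "t \<ge> 0 \<Longrightarrow> space (p t x) = UNIV"
  using sets_eq_imp_space_eq[OF p_sets] by simp

lemma Brho_int: "t \<ge> 0 \<Longrightarrow> f \<in> Brho \<rho> \<Longrightarrow> integrable (p t x) f"
  by (rule Brho_integrable[OF ws _ p_sets p_int])

lemma Brho_pmeas: "t \<ge> 0 \<Longrightarrow> f \<in> Brho \<rho> \<Longrightarrow> f \<in> borel_measurable (p t x)"
  by (rule baire_meas_sub[OF Brho_meas[OF ws] p_sets])

lemma hB: "f \<in> Cb \<Longrightarrow> hseq f n \<in> Brho \<rho>"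
  by (rule Cb_Brho[OF ws hseq_Cb])

lemma oneB: "(\<lambda>_. 1) \<in> Brho \<rho>"
proof (rule Cb_Brho[OF ws])
  show "(\<lambda>_. 1) \<in> Cb" unfolding Cb_def by auto
qed

lemma meas_lim:
  assumes t: "t \<ge> 0" and f: "f \<in> Cb"
  shows "(\<lambda>n. P t (hseq f n) x) \<longlonglongrightarrow> measure (p t x) (f -` {0})"
proof -
  interpret finite_measure "p t x" by (rule p_fin[OF t])
  have Z: "f -` {0} \<in> sets (p t x)" using Cb_zero_borel[OF f] p_sets[OF t] by simp
  have "(\<lambda>n. integral\<^sup>L (p t x) (hseq f n)) \<longlonglongrightarrow> integral\<^sup>L (p t x) (indicator (f -` {0}))"
  proof (rule integral_dominated_convergence[where w="\<lambda>_. 1"])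
    show "indicator (f -` {0}) \<in> borel_measurable (p t x)" by (rule borel_measurable_indicator[OF Z])
    show "hseq f n \<in> borel_measurable (p t x)" for n by (rule Brho_pmeas[OF t hB[OF f]])
    show "integrable (p t x) (\<lambda>_. 1::real)" by simp
    show "AE y in p t x. (\<lambda>n. hseq f n y) \<longlonglongrightarrow> indicator (f -` {0}) y"
      by (rule AE_I2) (rule hseq_lim)
    show "AE y in p t x. norm (hseq f n y) \<le> 1" for n
      by (rule AE_I2) (use hseq_bounds[of f n] in simp)
  qed
  moreover have "integral\<^sup>L (p t x) (indicator (f -` {0})) = measure (p t x) (f -` {0})"
    using p_space[OF t] by simp
  moreover have "P t (hseq f n) x = integral\<^sup>L (p t x) (hseq f n)" for n
    by (rule p_rep[OF t hB[OF f]])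
  ultimately show ?thesis by simp
qed

lemma meas_baire:
  assumes t: "t \<ge> 0" and f: "f \<in> Cb"
  shows "(\<lambda>x. measure (p t x) (f -` {0})) \<in> borel_measurable baire"
proof (rule borel_measurable_LIMSEQ_real[where u="\<lambda>n. P t (hseq f n)"])
  show "(\<lambda>n. P t (hseq f n) x) \<longlonglongrightarrow> measure (p t x) (f -` {0})" for x by (rule meas_lim[OF t f])
  show "P t (hseq f n) \<in> borel_measurable baire" for n
    by (rule Brho_meas[OF ws P_Brho[OF t hB[OF f]]])
qed

lemma ident_real:
  assumes s: "s \<ge> 0" and t: "t \<ge> 0" and f: "f \<in> Cb"
  shows "integrable (p t x) (\<lambda>y. measure (p s y) (f -` {0}))"
    and "(\<integral>y. measure (p s y) (f -` {0}) \<partial>(p t x)) = measure (p (s + t) x) (f -` {0})"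
proof -
  let ?Z = "f -` {0}"
  have fm: "(\<lambda>y. measure (p s y) ?Z) \<in> borel_measurable (p t x)"
    by (rule baire_meas_sub[OF meas_baire[OF s f] p_sets[OF t]])
  have sm: "P s (hseq f n) \<in> borel_measurable (p t x)" for n
    by (rule Brho_pmeas[OF t P_Brho[OF s hB[OF f]]])
  have wi: "integrable (p t x) (P s (\<lambda>_. 1))"
    by (rule Brho_int[OF t P_Brho[OF s oneB]])
  have lim: "AE y in p t x. (\<lambda>n. P s (hseq f n) y) \<longlonglongrightarrow> measure (p s y) ?Z"
    by (rule AE_I2) (rule meas_lim[OF s f])
  have bnd: "AE y in p t x. norm (P s (hseq f n) y) \<le> P s (\<lambda>_. 1) y" for n
  proof (rule AE_I2)
    fix y
    interpret finite_measure "p s y" by (rule p_fin[OF s])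
    have e1: "P s (hseq f n) y = integral\<^sup>L (p s y) (hseq f n)" by (rule p_rep[OF s hB[OF f]])
    have e2: "P s (\<lambda>_. 1) y = integral\<^sup>L (p s y) (\<lambda>_. 1)" by (rule p_rep[OF s oneB])
    have i1: "integrable (p s y) (hseq f n)" by (rule Brho_int[OF s hB[OF f]])
    have "0 \<le> integral\<^sup>L (p s y) (hseq f n)"
      by (rule integral_nonneg_AE) (rule AE_I2, rule hseq_bounds)
    moreover have "integral\<^sup>L (p s y) (hseq f n) \<le> integral\<^sup>L (p s y) (\<lambda>_. 1)"
      by (rule integral_mono[OF i1]) (simp_all add: hseq_bounds)
    ultimately show "norm (P s (hseq f n) y) \<le> P s (\<lambda>_. 1) y" unfolding e1 e2 by simp
  qed
  show int: "integrable (p t x) (\<lambda>y. measure (p s y) ?Z)"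
    by (rule integrable_dominated_convergence[OF fm sm wi lim bnd])
  have c1: "(\<lambda>n. integral\<^sup>L (p t x) (P s (hseq f n))) \<longlonglongrightarrow> (\<integral>y. measure (p s y) ?Z \<partial>(p t x))"
    by (rule integral_dominated_convergence[OF fm sm wi lim bnd])
  have eq: "integral\<^sup>L (p t x) (P s (hseq f n)) = P (s + t) (hseq f n) x" for n
    using p_rep[OF t P_Brho[OF s hB[OF f]], where x=x] P_semi[OF s t hB[OF f]] by simp
  have st: "s + t \<ge> 0" using s t by simp
  have c2: "(\<lambda>n. integral\<^sup>L (p t x) (P s (hseq f n))) \<longlonglongrightarrow> measure (p (s + t) x) ?Z"
    unfolding eq by (rule meas_lim[OF st f])
  show "(\<integral>y. measure (p s y) ?Z \<partial>(p t x)) = measure (p (s + t) x) ?Z"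
    by (rule LIMSEQ_unique[OF c1 c2])
qed

lemma ident_enn:
  assumes s: "s \<ge> 0" and t: "t \<ge> 0" and f: "f \<in> Cb"
  shows "(\<integral>\<^sup>+y. emeasure (p s y) (f -` {0}) \<partial>(p t x)) = emeasure (p (s + t) x) (f -` {0})"
proof -
  let ?Z = "f -` {0}"
  have st: "s + t \<ge> 0" using s t by simp
  have "(\<integral>\<^sup>+y. emeasure (p s y) ?Z \<partial>(p t x)) = (\<integral>\<^sup>+y. ennreal (measure (p s y) ?Z) \<partial>(p t x))"
  proof (rule nn_integral_cong)
    fix y
    interpret finite_measure "p s y" by (rule p_fin[OF s])
    show "emeasure (p s y) ?Z = ennreal (measure (p s y) ?Z)" by (rule emeasure_eq_measure)
  qed
  also have "\<dots> = ennreal (\<integral>y. measure (p s y) ?Z \<partial>(p t x))"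
    by (rule nn_integral_eq_integral[OF ident_real(1)[OF s t f]]) (rule AE_I2, rule measure_nonneg)
  also have "\<dots> = ennreal (measure (p (s + t) x) ?Z)" by (simp only: ident_real(2)[OF s t f])
  also have "\<dots> = emeasure (p (s + t) x) ?Z"
  proof -
    interpret finite_measure "p (s + t) x" by (rule p_fin[OF st])
    show ?thesis by (rule emeasure_eq_measure[symmetric])
  qed
  finally show ?thesis .
qed

lemma emeas_baire:
  assumes t: "t \<ge> 0" and f: "f \<in> Cb"
  shows "(\<lambda>x. emeasure (p t x) (f -` {0})) \<in> borel_measurable baire"
proof -
  have "(\<lambda>x. ennreal (measure (p t x) (f -` {0}))) \<in> borel_measurable baire"
    by (rule measurable_compose[OF meas_baire[OF t f] measurable_ennreal])
  moreover have "emeasure (p t x) (f -` {0}) = ennreal (measure (p t x) (f -` {0}))" for x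
  proof -
    interpret finite_measure "p t x" by (rule p_fin[OF t])
    show ?thesis by (rule emeasure_eq_measure)
  qed
  ultimately show ?thesis by simp
qed

lemma baire_p_sets: "t \<ge> 0 \<Longrightarrow> A \<in> sets baire \<Longrightarrow> A \<in> sets (p t x)"
  using baire_sub_borel p_sets by blast

lemma Q_basic:
  assumes "A \<in> ZS"
  shows "(\<forall>t\<ge>0. (\<lambda>x. emeasure (p t x) A) \<in> borel_measurable baire) \<and>
         (\<forall>s\<ge>0. \<forall>t\<ge>0. \<forall>x. (\<integral>\<^sup>+y. emeasure (p s y) A \<partial>(p t x)) = emeasure (p (s + t) x) A)"
proof -
  obtain f where f: "f \<in> Cb" "A = f -` {0}" using assms unfolding ZS_def by blast
  show ?thesis unfolding f(2) using emeas_baire[OF _ f(1)] ident_enn[OF _ _ f(1)] by blast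
qed

lemma UNIV_ZS: "UNIV \<in> ZS"
proof -
  have "(\<lambda>_. 0::real) \<in> Cb" by (rule Cb_I[where M=0]) auto
  moreover have "UNIV = (\<lambda>_. 0::real) -` {0}" by simp
  ultimately show ?thesis unfolding ZS_def by blast
qed

lemma Q_all:
  assumes "A \<in> sets baire"
  shows "(\<forall>t\<ge>0. (\<lambda>x. emeasure (p t x) A) \<in> borel_measurable baire) \<and>
         (\<forall>s\<ge>0. \<forall>t\<ge>0. \<forall>x. (\<integral>\<^sup>+y. emeasure (p s y) A \<partial>(p t x)) = emeasure (p (s + t) x) A)"
proof -
  have A: "A \<in> sigma_sets UNIV ZS" using assms unfolding sets_baire_ZS .
  have Z: "ZS \<subseteq> Pow UNIV" by simp
  from ZS_Int_stable Z A show ?thesis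
  proof (induct rule: sigma_sets_induct_disjoint)
    case (basic A)
    then show ?case by (rule Q_basic)
  next
    case empty
    show ?case by simp
  next
    case (compl A)
    have Ab: "A \<in> sets baire" using compl(1) unfolding sets_baire_ZS .
    have QU: "(\<forall>t\<ge>0. (\<lambda>x. emeasure (p t x) UNIV) \<in> borel_measurable baire) \<and>
         (\<forall>s\<ge>0. \<forall>t\<ge>0. \<forall>x. (\<integral>\<^sup>+y. emeasure (p s y) UNIV \<partial>(p t x)) = emeasure (p (s + t) x) UNIV)"
      by (rule Q_basic[OF UNIV_ZS])
    have ce: "emeasure (p t x) (UNIV - A) = emeasure (p t x) UNIV - emeasure (p t x) A" if t: "t \<ge> 0" for t x
    proof -
      interpret finite_measure "p t x" by (rule p_fin[OF t])
      have a: "A \<in> sets (p t x)" by (rule baire_p_sets[OF t Ab])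
      have b: "emeasure (p t x) A \<noteq> \<infinity>" using emeasure_finite[of A] by simp
      show ?thesis using emeasure_compl[OF a b] p_space[OF t] by simp
    qed
    show ?case
    proof (intro conjI allI impI)
      fix t :: real assume t: "t \<ge> 0"
      have m1[measurable]: "(\<lambda>x. emeasure (p t x) UNIV) \<in> borel_measurable baire" using QU t by blast
      have m2[measurable]: "(\<lambda>x. emeasure (p t x) A) \<in> borel_measurable baire" using compl(2) t by blast
      have "(\<lambda>x. emeasure (p t x) UNIV - emeasure (p t x) A) \<in> borel_measurable baire" by measurable
      then show "(\<lambda>x. emeasure (p t x) (UNIV - A)) \<in> borel_measurable baire" using ce[OF t] by simp
    next
      fix s t :: real and x assume s: "s \<ge> 0" and t: "t \<ge> 0"
      have st: "s + t \<ge> 0" using s t by simp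
      have m1: "(\<lambda>y. emeasure (p s y) UNIV) \<in> borel_measurable (p t x)"
        using QU s baire_meas_sub[OF _ p_sets[OF t]] by blast
      have m2: "(\<lambda>y. emeasure (p s y) A) \<in> borel_measurable (p t x)"
        using compl(2) s baire_meas_sub[OF _ p_sets[OF t]] by blast
      have i1: "(\<integral>\<^sup>+y. emeasure (p s y) UNIV \<partial>(p t x)) = emeasure (p (s + t) x) UNIV" using QU s t by blast
      have i2: "(\<integral>\<^sup>+y. emeasure (p s y) A \<partial>(p t x)) = emeasure (p (s + t) x) A" using compl(2) s t by blast
      have fin: "emeasure (p (s + t) x) A \<noteq> \<infinity>"
      proof -
        interpret finite_measure "p (s + t) x" by (rule p_fin[OF st])
        show ?thesis using emeasure_finite[of A] by simp
      qed
      have mono: "AE y in p t x. emeasure (p s y) A \<le> emeasure (p s y) UNIV"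
      proof (rule AE_I2)
        fix y
        show "emeasure (p s y) A \<le> emeasure (p s y) UNIV"
          by (rule emeasure_mono) (use p_space[OF s, of y] sets.top[of "p s y"] in \<open>simp_all\<close>)
      qed
      have "(\<integral>\<^sup>+y. emeasure (p s y) (UNIV - A) \<partial>(p t x)) = (\<integral>\<^sup>+y. emeasure (p s y) UNIV - emeasure (p s y) A \<partial>(p t x))"
        by (rule nn_integral_cong) (rule ce[OF s])
      also have "\<dots> = (\<integral>\<^sup>+y. emeasure (p s y) UNIV \<partial>(p t x)) - (\<integral>\<^sup>+y. emeasure (p s y) A \<partial>(p t x))"
        by (rule nn_integral_diff[OF m1 m2 _ mono]) (simp only: i2 fin not_False_eq_True)
      also have "\<dots> = emeasure (p (s + t) x) (UNIV - A)" unfolding i1 i2 ce[OF st] ..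
      finally show "(\<integral>\<^sup>+y. emeasure (p s y) (UNIV - A) \<partial>(p t x)) = emeasure (p (s + t) x) (UNIV - A)" .
    qed
  next
    case (union A)
    have Ab: "A i \<in> sets baire" for i using union(2) unfolding sets_baire_ZS by blast
    have ue: "emeasure (p t x) (\<Union>i. A i) = (\<Sum>i. emeasure (p t x) (A i))" if t: "t \<ge> 0" for t x
      by (rule suminf_emeasure[symmetric]) (use baire_p_sets[OF t Ab] union(1) in auto)
    show ?case
    proof (intro conjI allI impI)
      fix t :: real assume t: "t \<ge> 0"
      have "(\<lambda>x. emeasure (p t x) (A i)) \<in> borel_measurable baire" for i using union(3)[of i] t by blast
      then have "(\<lambda>x. \<Sum>i. emeasure (p t x) (A i)) \<in> borel_measurable baire"
        by (rule borel_measurable_suminf_order)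
      then show "(\<lambda>x. emeasure (p t x) (\<Union>i. A i)) \<in> borel_measurable baire" using ue[OF t] by simp
    next
      fix s t :: real and x assume s: "s \<ge> 0" and t: "t \<ge> 0"
      have st: "s + t \<ge> 0" using s t by simp
      have m: "(\<lambda>y. emeasure (p s y) (A i)) \<in> borel_measurable (p t x)" for i
        using union(3)[of i] s baire_meas_sub[OF _ p_sets[OF t]] by blast
      have ii: "(\<integral>\<^sup>+y. emeasure (p s y) (A i) \<partial>(p t x)) = emeasure (p (s + t) x) (A i)" for i
        using union(3)[of i] s t by blast
      have "(\<integral>\<^sup>+y. emeasure (p s y) (\<Union>i. A i) \<partial>(p t x)) = (\<integral>\<^sup>+y. (\<Sum>i. emeasure (p s y) (A i)) \<partial>(p t x))"
        by (rule nn_integral_cong) (rule ue[OF s])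
      also have "\<dots> = (\<Sum>i. (\<integral>\<^sup>+y. emeasure (p s y) (A i) \<partial>(p t x)))"
        by (rule nn_integral_suminf[OF m])
      also have "\<dots> = emeasure (p (s + t) x) (\<Union>i. A i)" unfolding ii ue[OF st] ..
      finally show "(\<integral>\<^sup>+y. emeasure (p s y) (\<Union>i. A i) \<partial>(p t x)) = emeasure (p (s + t) x) (\<Union>i. A i)" .
    qed
  qed
qed

end


theorem mainTheorem4:
  fixes \<rho> :: "'a::topological_space \<Rightarrow> real"
    and P :: "real \<Rightarrow> ('a \<Rightarrow> real) \<Rightarrow> ('a \<Rightarrow> real)"
    and p :: "real \<Rightarrow> 'a \<Rightarrow> 'a measure"
  assumes "weighted_space \<rho>"
    and "gen_feller_semigroup \<rho> P"
    and "associated_measures \<rho> P p"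
  shows "(\<forall>t\<ge>0. \<forall>A\<in>sets baire.
            (\<lambda>x. emeasure (restr_baire (p t x)) A) \<in> borel_measurable baire)
       \<and> (\<forall>s\<ge>0. \<forall>t\<ge>0. \<forall>x. \<forall>A\<in>sets baire.
            (\<integral>\<^sup>+ y. emeasure (restr_baire (p s y)) A \<partial>(restr_baire (p t x)))
              = emeasure (restr_baire (p (s + t) x)) A)"
proof -
  note Q = Q_all[OF assms]
  have sub: "subalgebra (p t x) baire" if t: "t \<ge> 0" for t x
    unfolding subalgebra_def
    using p_space[OF assms t, of x] p_sets[OF assms t, of x] baire_sub_borel by simp
  have rb: "restr_baire (p t x) = restr_to_subalg (p t x) baire" if t: "t \<ge> 0" for t x
    unfolding restr_baire_def restr_to_subalg_def using p_space[OF assms t, of x] by simp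
  have em: "emeasure (restr_baire (p t x)) A = emeasure (p t x) A" if t: "t \<ge> 0" and A: "A \<in> sets baire" for t x and A :: "'a set"
    unfolding rb[OF t] by (rule emeasure_restr_to_subalg[OF sub[OF t] A])
  show ?thesis
  proof (intro conjI allI impI ballI)
    fix t :: real and A :: "'a set" assume t: "t \<ge> 0" and A: "A \<in> sets baire"
    have "(\<lambda>x. emeasure (p t x) A) \<in> borel_measurable baire" using Q[OF A] t by blast
    moreover have "(\<lambda>x. emeasure (restr_baire (p t x)) A) = (\<lambda>x. emeasure (p t x) A)"
      using em[OF t A] by simp
    ultimately show "(\<lambda>x. emeasure (restr_baire (p t x)) A) \<in> borel_measurable baire" by simp
  next
    fix s t :: real and x and A :: "'a set" assume s: "s \<ge> 0" and t: "t \<ge> 0" and A: "A \<in> sets baire"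
    have st: "s + t \<ge> 0" using s t by simp
    have m: "(\<lambda>y. emeasure (p s y) A) \<in> borel_measurable baire" using Q[OF A] s by blast
    have "(\<integral>\<^sup>+ y. emeasure (restr_baire (p s y)) A \<partial>(restr_baire (p t x)))
        = (\<integral>\<^sup>+ y. emeasure (p s y) A \<partial>(restr_baire (p t x)))"
      by (rule nn_integral_cong) (rule em[OF s A])
    also have "\<dots> = (\<integral>\<^sup>+ y. emeasure (p s y) A \<partial>(p t x))"
      unfolding rb[OF t] by (rule nn_integral_subalgebra2[OF sub[OF t] m])
    also have "\<dots> = emeasure (p (s + t) x) A" using Q[OF A] s t by blast
    also have "\<dots> = emeasure (restr_baire (p (s + t) x)) A" by (rule em[OF st A, symmetric])
    finally show "(\<integral>\<^sup>+ y. emeasure (restr_baire (p s y)) A \<partial>(restr_baire (p t x)))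
              = emeasure (restr_baire (p (s + t) x)) A" .
  qed
qed

end
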